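(* Let $S_j$ be local potentials satisfying (A)–(E) and let $K\subset\mathbb{R}^d$ be compact. There is, for every $n\in\mathbb{N}$, a constant $\delta_n>0$ depending only on $K$, $n$ (and the potentials) such that the following holds: if $x<y$ are two Birkhoff configurations with rotation vectors in $K$ that are both stationary, then for all $i,k\in\mathbb{Z}^d$, $$y_k-x_k\le\delta_{\|i-k\|}\,(y_i-x_i).$$ In particular, $x<y$ implies $x\ll y$.
   Context: Notation: $\|i\|=\sum_{k=1}^d|i_k|$, $B_j^r=\{k:\|k-j\|\le r\}$, $(\tau_{k,l}x)_i=x_{i+k}+l$. Local potentials $S_j:\mathbb{R}^{\mathbb{Z}^d}\to\mathbb{R}$, $j\in\mathbb{Z}^d$, satisfy: (A) there is $r\in(0,\infty)$ and $C^2$ functions $s_j:\mathbb{R}^{B_j^r}\to\mathbb{R}$ with $S_j(x)=s_j(x|_{B_j^r})$; (B) $S_j(\tau_{k,l}x)=S_{j+k}(x)$; (C) each $S_j$ is bounded below and $S_j(x)\to\infty$ as $|x_k-x_j|\to\infty$ whenever $\|k-j\|=1$; (D) $\partial_{i,k}S_j\le0$ for $i\ne k$, and $\partial_{i,k}S_i<0$ when $\|i-k\|=1$; (E) $|\partial_{i,k}S_j|\le C$ uniformly. Order: $x\le y$ iff $x_i\le y_i$ for all $i$; $x<y$ iff $x\le y$, $x\ne y$; $x\ll y$ iff $x_i<y_i$ for all $i$. Birkhoff: for every $(k,l)$, $\tau_{k,l}x\ge x$ or $\tau_{k,l}x\le x$. Rotation vector $\omega$: $\lim_n x_{ni}/n=\langle\omega,i\rangle$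 for all $i$. A configuration $x$ is stationary if $\sum_{\|j-i\|\le r}\partial_iS_j(x)=0$ for all $i\in\mathbb{Z}^d$. *)

theory Defs
  imports "HOL-Analysis.Analysis"
begin

type_synonym ('d) config = "(int ^ ('d::finite)) \<Rightarrow> real"

definition l1norm :: "int ^ ('d::finite) \<Rightarrow> nat" where
  "l1norm i = (\<Sum>m\<in>UNIV. nat \<bar>i $ m\<bar>)"

definition ball1 :: "int ^ ('d::finite) \<Rightarrow> real \<Rightarrow> (int ^ ('d::finite)) set" where
  "ball1 j r = {k. real (l1norm (k - j)) \<le> r}"

definition shift :: "int ^ ('d::finite) \<Rightarrow> int \<Rightarrow> ('d::finite) config \<Rightarrow> ('d::finite) config" where
  "shift k l x = (\<lambda>i. x (i + k) + real_of_int l)"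

definition pdiff :: "int ^ ('d::finite) \<Rightarrow> (('d::finite) config \<Rightarrow> real) \<Rightarrow> ('d::finite) config \<Rightarrow> real" where
  "pdiff i F x = deriv (\<lambda>t. F (x(i := t))) (x i)"

definition pdiff_exists :: "int ^ ('d::finite) \<Rightarrow> (('d::finite) config \<Rightarrow> real) \<Rightarrow> bool" where
  "pdiff_exists i F \<longleftrightarrow> (\<forall>x. (\<lambda>t. F (x(i := t))) differentiable (at (x i)))"

definition depends_only_on :: "(('d::finite) config \<Rightarrow> real) \<Rightarrow> (int ^ ('d::finite)) set \<Rightarrow> bool" where
  "depends_only_on F B \<longleftrightarrow> (\<forall>x y. (\<forall>k\<in>B. x k = y k) \<longrightarrow> F x = F y)"

(* C^2 for a function of finitely many real variables: all partial derivatives of order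
   \<le> 2 exist and are continuous (product topology on configurations) *)
definition C2_local :: "(('d::finite) config \<Rightarrow> real) \<Rightarrow> bool" where
  "C2_local F \<longleftrightarrow> continuous_on UNIV F \<and>
     (\<forall>i. pdiff_exists i F \<and> continuous_on UNIV (pdiff i F) \<and>
        (\<forall>k. pdiff_exists k (pdiff i F) \<and> continuous_on UNIV (pdiff k (pdiff i F))))"

definition local_potentials ::
  "real \<Rightarrow> (int ^ ('d::finite) \<Rightarrow> ('d::finite) config \<Rightarrow> real) \<Rightarrow> bool" where
  "local_potentials r S \<longleftrightarrow>
     \<comment> \<open>(A)\<close>
     0 < r \<and>
     (\<forall>j. depends_only_on (S j) (ball1 j r) \<and> C2_local (S j)) \<and>
     \<comment> \<open>(B)\<close>
     (\<forall>j k l x. S j (shift k l x) = S (j + k) x) \<and>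
     \<comment> \<open>(C)\<close>
     (\<forall>j. bdd_below (range (S j))) \<and>
     (\<forall>j k. l1norm (k - j) = 1 \<longrightarrow>
        (\<forall>M. \<exists>R. \<forall>x. \<bar>x k - x j\<bar> \<ge> R \<longrightarrow> S j x \<ge> M)) \<and>
     \<comment> \<open>(D)\<close>
     (\<forall>i k j x. i \<noteq> k \<longrightarrow> pdiff k (pdiff i (S j)) x \<le> 0) \<and>
     (\<forall>i k x. l1norm (i - k) = 1 \<longrightarrow> pdiff k (pdiff i (S i)) x < 0) \<and>
     \<comment> \<open>(E)\<close>
     (\<exists>C. \<forall>i k j x. \<bar>pdiff k (pdiff i (S j)) x\<bar> \<le> C)"

(* order relations on configurations: \<le> and < are the pointwise library orders on functions;
   x \<ll> y: *)
definition strictly_below :: "('d::finite) config \<Rightarrow> ('d::finite) config \<Rightarrow> bool" where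
  "strictly_below x y \<longleftrightarrow> (\<forall>i. x i < y i)"

definition birkhoff :: "('d::finite) config \<Rightarrow> bool" where
  "birkhoff x \<longleftrightarrow> (\<forall>k l. shift k l x \<ge> x \<or> shift k l x \<le> x)"

definition has_rotation_vector :: "('d::finite) config \<Rightarrow> real ^ ('d::finite) \<Rightarrow> bool" where
  "has_rotation_vector x \<omega> \<longleftrightarrow>
     (\<forall>i. (\<lambda>n::nat. x (of_nat n * i) / real n) \<longlonglongrightarrow>
            (\<Sum>m\<in>UNIV. \<omega> $ m * real_of_int (i $ m)))"

definition stationary :: "real \<Rightarrow> (int ^ ('d::finite) \<Rightarrow> ('d::finite) config \<Rightarrow> real) \<Rightarrow> ('d::finite) config \<Rightarrow> bool" where
  "stationary r S x \<longleftrightarrow> (\<forall>i. (\<Sum>j\<in>ball1 i r. pdiff i (S j) x) = 0)"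

end

theory Submission
  imports Defs
begin



lemma deriv_shift_eq:
  fixes g :: "real \<Rightarrow> real"
  shows "deriv (\<lambda>t. g (t - c)) (u + c) = deriv g u"
proof -
  have "\<And>D. ((\<lambda>t. g (t - c)) has_field_derivative D) (at (u + c)) \<longleftrightarrow> (g has_field_derivative D) (at u)"
    by (subst DERIV_shift) simp
  then show ?thesis unfolding deriv_def by simp
qed

lemma pdiff_shift:
  assumes "\<And>x. G (shift a l x) = H x"
  shows "pdiff i G (shift a l x) = pdiff (i + a) H x"
proof -
  have e: "(shift a l x)(i := t) = shift a l (x(i + a := t - real_of_int l))" for t
    by (auto simp: shift_def fun_eq_iff)
  have "pdiff i G (shift a l x) = deriv (\<lambda>t. H (x(i + a := t - real_of_int l))) (x (i + a) + real_of_int l)"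
    unfolding pdiff_def e assms by (simp add: shift_def)
  also have "\<dots> = deriv (\<lambda>t. H (x(i + a := t))) (x (i + a))"
    by (rule deriv_shift_eq[where g = "\<lambda>t. H (x(i + a := t))"])
  finally show ?thesis unfolding pdiff_def .
qed

lemma pdiff_depends:
  fixes F :: "'d::finite config \<Rightarrow> real"
  assumes "depends_only_on F B"
  shows "depends_only_on (pdiff i F) B"
  unfolding depends_only_on_def
proof (intro allI impI)
  fix x y :: "'d config" assume xy: "\<forall>k\<in>B. x k = y k"
  have f: "(\<lambda>t. F (x(i := t))) = (\<lambda>t. F (y(i := t)))"
    using assms xy unfolding depends_only_on_def by (intro ext) (metis fun_upd_apply)
  show "pdiff i F x = pdiff i F y"
  proof (cases "i \<in> B")
    case True then show ?thesis unfolding pdiff_def using f xy by simp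
  next
    case False
    have "(\<lambda>t. F (x(i := t))) = (\<lambda>t. F x)"
      using assms False unfolding depends_only_on_def by (intro ext) auto
    then show ?thesis unfolding pdiff_def using f by (simp add: DERIV_imp_deriv[OF DERIV_const])
  qed
qed

lemma pdiff_outside:
  assumes "depends_only_on F B" "i \<notin> B"
  shows "pdiff i F x = 0"
proof -
  have "(\<lambda>t. F (x(i := t))) = (\<lambda>t. F x)"
    using assms unfolding depends_only_on_def by (intro ext) auto
  then show ?thesis unfolding pdiff_def by (simp add: DERIV_imp_deriv[OF DERIV_const])
qed

lemma mvt_coord:
  fixes F :: "'d::finite config \<Rightarrow> real"
  assumes "pdiff_exists k F"
  shows "\<exists>\<xi>. min a b \<le> \<xi> \<and> \<xi> \<le> max a b \<and>
     F (p(k := b)) - F (p(k := a)) = (b - a) * pdiff k F (p(k := \<xi>))"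
proof -
  define f where "f t = F (p(k := t))" for t
  have D: "DERIV f t :> pdiff k F (p(k := t))" for t
  proof -
    have "(\<lambda>s. F ((p(k := t))(k := s))) differentiable (at ((p(k := t)) k))"
      using assms unfolding pdiff_exists_def by blast
    then have "f differentiable (at t)" by (simp add: f_def[abs_def])
    then have "DERIV f t :> deriv f t" by (simp add: DERIV_deriv_iff_real_differentiable)
    moreover have "deriv f t = pdiff k F (p(k := t))"
      unfolding pdiff_def f_def[abs_def] by simp
    ultimately show ?thesis by simp
  qed
  consider "a < b" | "a = b" | "b < a" by linarith
  then show ?thesis
  proof cases
    case 1
    from MVT2[OF 1, of f "\<lambda>t. pdiff k F (p(k := t))"] D obtain z where
      "a < z" "z < b" "f b - f a = (b - a) * pdiff k F (p(k := z))" by blast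
    then show ?thesis by (intro exI[of _ z]) (auto simp: f_def)
  next
    case 2 then show ?thesis by (intro exI[of _ a]) auto
  next
    case 3
    from MVT2[OF 3, of f "\<lambda>t. pdiff k F (p(k := t))"] D obtain z where
      "b < z" "z < a" "f a - f b = (a - b) * pdiff k F (p(k := z))" by blast
    then show ?thesis by (intro exI[of _ z]) (auto simp: f_def algebra_simps)
  qed
qed

lemma telescope:
  fixes F :: "'d::finite config \<Rightarrow> real"
  assumes "finite A" "\<And>k. pdiff_exists k F"
  shows "(\<forall>m. m \<notin> A \<longrightarrow> p m = q m) \<Longrightarrow> \<exists>c. F q - F p = (\<Sum>k\<in>A. (q k - p k) * c k) \<and>
     (\<forall>k\<in>A. \<exists>z. (\<forall>m. min (p m) (q m) \<le> z m \<and> z m \<le> max (p m) (q m)) \<and> c k = pdiff k F z)"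
  using assms(1)
proof (induction A arbitrary: p)
  case empty
  then have "p = q" by auto
  then show ?case by auto
next
  case (insert b A)
  define p' where "p' = p(b := q b)"
  have "\<forall>m. m \<notin> A \<longrightarrow> p' m = q m" using insert.prems by (auto simp: p'_def)
  from insert.IH[OF this] obtain c where c: "F q - F p' = (\<Sum>k\<in>A. (q k - p' k) * c k)"
    "\<forall>k\<in>A. \<exists>z. (\<forall>m. min (p' m) (q m) \<le> z m \<and> z m \<le> max (p' m) (q m)) \<and> c k = pdiff k F z"
    by blast
  from mvt_coord[OF assms(2)[of b], of "p b" "q b" p] obtain \<xi> where xi:
    "min (p b) (q b) \<le> \<xi>" "\<xi> \<le> max (p b) (q b)"
    "F (p(b := q b)) - F (p(b := p b)) = (q b - p b) * pdiff b F (p(b := \<xi>))" by blast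
  define c' where "c' = c(b := pdiff b F (p(b := \<xi>)))"
  have s: "(\<Sum>k\<in>A. (q k - p' k) * c k) = (\<Sum>k\<in>A. (q k - p k) * c' k)"
    using insert.hyps by (intro sum.cong) (auto simp: p'_def c'_def)
  have "F q - F p = (F q - F p') + (F p' - F p)" by simp
  also have "\<dots> = (\<Sum>k\<in>insert b A. (q k - p k) * c' k)"
    using c(1) s xi(3) insert.hyps by (simp add: p'_def c'_def)
  finally have 1: "F q - F p = (\<Sum>k\<in>insert b A. (q k - p k) * c' k)" .
  have 2: "\<forall>k\<in>insert b A. \<exists>z. (\<forall>m. min (p m) (q m) \<le> z m \<and> z m \<le> max (p m) (q m)) \<and> c' k = pdiff k F z"
  proof
    fix k assume k: "k \<in> insert b A"
    show "\<exists>z. (\<forall>m. min (p m) (q m) \<le> z m \<and> z m \<le> max (p m) (q m)) \<and> c' k = pdiff k F z"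
    proof (cases "k = b")
      case True
      then show ?thesis using xi(1,2) by (intro exI[of _ "p(b := \<xi>)"]) (auto simp: c'_def)
    next
      case False
      with k have "k \<in> A" by auto
      with c(2) obtain z where z: "\<forall>m. min (p' m) (q m) \<le> z m \<and> z m \<le> max (p' m) (q m)" "c k = pdiff k F z" by blast
      have "\<forall>m. min (p m) (q m) \<le> z m \<and> z m \<le> max (p m) (q m)"
      proof
        fix m show "min (p m) (q m) \<le> z m \<and> z m \<le> max (p m) (q m)"
          using z(1)[rule_format, of m] by (cases "m = b") (auto simp: p'_def)
      qed
      then show ?thesis using z(2) False by (auto simp: c'_def)
    qed
  qed
  from 1 2 show ?case by blast
qed



definition rv :: "real ^ ('d::finite) \<Rightarrow> int ^ 'd \<Rightarrow> real" where
  "rv \<omega> k = (\<Sum>m\<in>UNIV. \<omega> $ m * real_of_int (k $ m))"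

lemma birk_interval:
  assumes "birkhoff x"
  shows "x (i + k) - x i - (x (i' + k) - x i') \<le> 1"
proof (rule ccontr)
  assume H: "\<not> ?thesis"
  define a where "a = x (i' + k) - x i'"
  define b where "b = x (i + k) - x i"
  define l where "l = \<lfloor>-b\<rfloor> + 1"
  have l1: "real_of_int l > -b" unfolding l_def by linarith
  have l2: "real_of_int l < -a" using H unfolding l_def a_def b_def by linarith
  from assms[unfolded birkhoff_def, rule_format, of k l] show False
  proof
    assume "shift k l x \<ge> x"
    then have "x i' \<le> shift k l x i'" by (simp add: le_fun_def)
    then show False using l2 by (simp add: shift_def a_def)
  next
    assume "shift k l x \<le> x"
    then have "shift k l x i \<le> x i" by (simp add: le_fun_def)
    then show False using l1 by (simp add: shift_def b_def)
  qed
qed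

lemma of_nat_Suc_vec: "(of_nat (Suc n) :: int ^ 'd::finite) * k = of_nat n * k + k"
  by (simp add: algebra_simps)

lemma rot_upper:
  fixes x :: "'d::finite config"
  assumes "has_rotation_vector x \<omega>" "\<And>i. x (i + k) - x i \<le> b"
  shows "rv \<omega> k \<le> b"
proof -
  have ind: "x (of_nat n * k) - x 0 \<le> real n * b" for n
  proof (induction n)
    case 0 then show ?case by simp
  next
    case (Suc n)
    have "x (of_nat (Suc n) * k) = x (of_nat n * k + k)" by (simp only: of_nat_Suc_vec)
    moreover have "x (of_nat n * k + k) - x (of_nat n * k) \<le> b" by (rule assms(2))
    ultimately show ?case using Suc by (simp add: algebra_simps)
  qed
  have L1: "(\<lambda>n::nat. x (of_nat n * k) / real n) \<longlonglongrightarrow> rv \<omega> k"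
    using assms(1) unfolding has_rotation_vector_def rv_def by blast
  have L2: "(\<lambda>n::nat. x 0 / real n + b) \<longlonglongrightarrow> 0 + b"
    by (intro tendsto_add tendsto_const lim_const_over_n)
  have ev: "\<forall>n\<ge>1. x (of_nat n * k) / real n \<le> x 0 / real n + b"
  proof (intro allI impI)
    fix n :: nat assume "n \<ge> 1"
    then have "real n > 0" by simp
    then show "x (of_nat n * k) / real n \<le> x 0 / real n + b"
      using ind[of n] by (simp add: field_simps)
  qed
  show ?thesis using LIMSEQ_le[OF L1 L2] ev by auto
qed

lemma rot_lower:
  fixes x :: "'d::finite config"
  assumes "has_rotation_vector x \<omega>" "\<And>i. x (i + k) - x i \<ge> b"
  shows "rv \<omega> k \<ge> b"
proof -
  have ind: "x (of_nat n * k) - x 0 \<ge> real n * b" for n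
  proof (induction n)
    case 0 then show ?case by simp
  next
    case (Suc n)
    have "x (of_nat (Suc n) * k) = x (of_nat n * k + k)" by (simp only: of_nat_Suc_vec)
    moreover have "x (of_nat n * k + k) - x (of_nat n * k) \<ge> b" by (rule assms(2))
    ultimately show ?case using Suc by (simp add: algebra_simps)
  qed
  have L1: "(\<lambda>n::nat. x (of_nat n * k) / real n) \<longlonglongrightarrow> rv \<omega> k"
    using assms(1) unfolding has_rotation_vector_def rv_def by blast
  have L2: "(\<lambda>n::nat. x 0 / real n + b) \<longlonglongrightarrow> 0 + b"
    by (intro tendsto_add tendsto_const lim_const_over_n)
  have ev: "\<forall>n\<ge>1. x (of_nat n * k) / real n \<ge> x 0 / real n + b"
  proof (intro allI impI)
    fix n :: nat assume "n \<ge> 1"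
    then have "real n > 0" by simp
    have "x 0 + real n * b \<le> x (of_nat n * k)" using ind[of n] by linarith
    then have "(x 0 + real n * b) / real n \<le> x (of_nat n * k) / real n"
      by (rule divide_right_mono) simp
    moreover have "(x 0 + real n * b) / real n = x 0 / real n + b"
      using \<open>real n > 0\<close> by (simp add: field_simps)
    ultimately show "x (of_nat n * k) / real n \<ge> x 0 / real n + b" by simp
  qed
  show ?thesis using LIMSEQ_le[OF L2 L1] ev by auto
qed

lemma birk_bound:
  fixes x :: "'d::finite config"
  assumes "birkhoff x" "has_rotation_vector x \<omega>"
  shows "\<bar>x (i + k) - x i - rv \<omega> k\<bar> \<le> 1"
proof -
  have "rv \<omega> k \<le> x (i + k) - x i + 1"
  proof (rule rot_upper[OF assms(2)])
    fix ia show "x (ia + k) - x ia \<le> x (i + k) - x i + 1"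
      using birk_interval[OF assms(1), of ia k i] by linarith
  qed
  moreover have "rv \<omega> k \<ge> x (i + k) - x i - 1"
  proof (rule rot_lower[OF assms(2)])
    fix ia show "x (ia + k) - x ia \<ge> x (i + k) - x i - 1"
      using birk_interval[OF assms(1), of i k ia] by linarith
  qed
  ultimately show ?thesis by linarith
qed

lemma l1norm_real: "real (l1norm d) = (\<Sum>m\<in>UNIV. \<bar>real_of_int (d $ m)\<bar>)"
  unfolding l1norm_def by (simp add: of_nat_sum)

lemma rv_bound:
  assumes "\<And>m. \<bar>\<omega> $ m\<bar> \<le> B"
  shows "\<bar>rv \<omega> k\<bar> \<le> B * real (l1norm k)"
proof -
  have "\<bar>rv \<omega> k\<bar> \<le> (\<Sum>m\<in>UNIV. \<bar>\<omega> $ m * real_of_int (k $ m)\<bar>)"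
    unfolding rv_def by (rule sum_abs)
  also have "\<dots> \<le> (\<Sum>m\<in>UNIV. B * \<bar>real_of_int (k $ m)\<bar>)"
  proof (rule sum_mono)
    fix m
    have "\<bar>\<omega> $ m * real_of_int (k $ m)\<bar> = \<bar>\<omega> $ m\<bar> * \<bar>real_of_int (k $ m)\<bar>" by (rule abs_mult)
    also have "\<dots> \<le> B * \<bar>real_of_int (k $ m)\<bar>" by (rule mult_right_mono[OF assms abs_ge_zero])
    finally show "\<bar>\<omega> $ m * real_of_int (k $ m)\<bar> \<le> B * \<bar>real_of_int (k $ m)\<bar>" .
  qed
  also have "\<dots> = B * real (l1norm k)"
    by (simp only: l1norm_real sum_distrib_left)
  finally show ?thesis .
qed

lemma l1norm_minus: "l1norm (- d) = l1norm d"
  unfolding l1norm_def by simp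

lemma l1norm_zero: "l1norm d = 0 \<longleftrightarrow> d = 0"
  unfolding l1norm_def by (auto simp: vec_eq_iff)

lemma comp_le_l1norm: "nat \<bar>d $ m\<bar> \<le> l1norm d"
  unfolding l1norm_def by (rule member_le_sum) auto

lemma l1norm_step:
  assumes "l1norm d = Suc n"
  shows "\<exists>e. l1norm e = 1 \<and> l1norm (d - e) = n"
proof -
  have "d \<noteq> 0" using assms l1norm_zero by force
  then obtain m where m: "d $ m \<noteq> 0" by (auto simp: vec_eq_iff)
  define e :: "int ^ 'a" where "e = (\<chi> j. if j = m then sgn (d $ m) else 0)"
  have "l1norm e = (\<Sum>j\<in>UNIV. if j = m then 1 else 0)"
    unfolding l1norm_def e_def using m by (intro sum.cong) (auto simp: abs_sgn)
  then have 1: "l1norm e = 1" by simp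
  have "nat \<bar>d $ j\<bar> = nat \<bar>(d - e) $ j\<bar> + (if j = m then 1 else 0)" for j
    using m by (cases "d $ m > 0") (auto simp: e_def)
  then have "l1norm d = (\<Sum>j\<in>UNIV. nat \<bar>(d - e) $ j\<bar> + (if j = m then 1 else 0))"
    unfolding l1norm_def by (intro sum.cong) auto
  also have "\<dots> = l1norm (d - e) + 1" unfolding l1norm_def by (simp add: sum.distrib)
  finally show ?thesis using 1 assms by auto
qed

lemma finite_box: "finite {k :: int ^ 'd::finite. \<forall>m. k $ m \<in> {lo m..hi m}}"
proof -
  have "{k :: int ^ 'd. \<forall>m. k $ m \<in> {lo m..hi m}} = vec_nth -` (PiE UNIV (\<lambda>m. {lo m..hi m}))"
    by (auto simp: PiE_iff)
  moreover have "finite (vec_nth -` (PiE UNIV (\<lambda>m. {lo m..hi m})))"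
    by (intro finite_vimageI finite_PiE) (auto simp: inj_def vec_eq_iff)
  ultimately show ?thesis by simp
qed

lemma finite_ball1: "finite (ball1 j r)"
proof -
  have "ball1 j r \<subseteq> {k. \<forall>m. k $ m \<in> {j $ m - \<lceil>r\<rceil> .. j $ m + \<lceil>r\<rceil>}}"
  proof
    fix k assume "k \<in> ball1 j r"
    then have h: "real (l1norm (k - j)) \<le> r" by (simp add: ball1_def)
    show "k \<in> {k. \<forall>m. k $ m \<in> {j $ m - \<lceil>r\<rceil> .. j $ m + \<lceil>r\<rceil>}}"
    proof (clarify)
      fix m
      have "nat \<bar>(k - j) $ m\<bar> \<le> l1norm (k - j)" by (rule comp_le_l1norm)
      then have "\<bar>(k - j) $ m\<bar> \<le> int (l1norm (k - j))" by linarith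
      then have "real_of_int \<bar>(k - j) $ m\<bar> \<le> real (l1norm (k - j))"
        by (metis of_int_le_iff of_int_of_nat_eq)
      also have "\<dots> \<le> real_of_int \<lceil>r\<rceil>" using h le_of_int_ceiling by linarith
      finally have "\<bar>(k - j) $ m\<bar> \<le> \<lceil>r\<rceil>" by (simp only: of_int_le_iff)
      then have "\<bar>k $ m - j $ m\<bar> \<le> \<lceil>r\<rceil>" by (simp only: vector_minus_component)
      then show "k $ m \<in> {j $ m - \<lceil>r\<rceil> .. j $ m + \<lceil>r\<rceil>}" by auto
    qed
  qed
  then show ?thesis by (rule finite_subset[OF _ finite_box])
qed

lemma ball1_translate: "ball1 i r = (\<lambda>m. m + i) ` ball1 0 r"
  unfolding ball1_def by (auto simp: image_iff intro!: exI[of _ "_ - i"])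

lemma card_ball1: "card (ball1 (i :: int ^ 'd::finite) r) = card (ball1 (0 :: int ^ 'd) r)"
proof -
  have eq: "ball1 i r = (\<lambda>m. m + i) ` ball1 0 r" by (rule ball1_translate)
  have inj: "inj_on (\<lambda>m. m + i) (ball1 0 r)" by (rule inj_onI) (rule add_right_imp_eq)
  show ?thesis unfolding eq using Finite_Set.card_image[OF inj] by simp
qed

lemma center_ball1: "r \<ge> 0 \<Longrightarrow> i \<in> ball1 i r"
  unfolding ball1_def by (simp add: l1norm_def)

lemma compact_Q:
  "compact (PiE UNIV (\<lambda>m. if m \<in> B then {-R..R} else {0}) :: 'd::finite config set)"
proof -
  have "compactin (product_topology (\<lambda>i. euclidean) UNIV) (PiE UNIV (\<lambda>m. if m \<in> B then {-R..R::real} else {0}) :: 'd config set)"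
    by (subst compactin_PiE) auto
  then show ?thesis by (simp add: euclidean_product_topology)
qed



lemma finite_eps:
  fixes G :: "'e \<Rightarrow> 'w \<Rightarrow> real"
  assumes "finite E" "\<forall>e\<in>E. \<exists>\<epsilon>>0. \<forall>w\<in>Q. G e w \<le> - \<epsilon>"
  shows "\<exists>\<epsilon>>0. \<forall>e\<in>E. \<forall>w\<in>Q. G e w \<le> - \<epsilon>"
  using assms
proof (induction E rule: finite_induct)
  case empty
  show ?case by (intro exI[of _ 1]) simp
next
  case (insert a E)
  then obtain \<epsilon>1 where e1: "\<epsilon>1 > 0" "\<forall>e\<in>E. \<forall>w\<in>Q. G e w \<le> - \<epsilon>1" by auto
  from insert.prems obtain \<epsilon>2 where e2: "\<epsilon>2 > 0" "\<forall>w\<in>Q. G a w \<le> - \<epsilon>2" by auto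
  show ?case
  proof (intro exI[of _ "min \<epsilon>1 \<epsilon>2"] conjI ballI)
    show "min \<epsilon>1 \<epsilon>2 > 0" using e1 e2 by simp
  next
    fix e w assume "e \<in> insert a E" "w \<in> Q"
    then show "G e w \<le> - min \<epsilon>1 \<epsilon>2" using e1(2) e2(2) by force
  qed
qed

lemma finite_unit: "finite {e :: int ^ 'd::finite. l1norm (- e) = 1}"
proof (rule finite_subset[OF _ finite_ball1[of "0 :: int ^ 'd" 1]])
  show "{e :: int ^ 'd. l1norm (- e) = 1} \<subseteq> ball1 0 1"
    by (auto simp: ball1_def l1norm_minus)
qed

lemma LP_facts:
  assumes LP: "local_potentials r S"
  shows "\<And>j. depends_only_on (S j) (ball1 j r)" "\<And>j. C2_local (S j)"
    "\<And>j k l x. S j (shift k l x) = S (j + k) x"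
    "\<And>i k j x. i \<noteq> k \<Longrightarrow> pdiff k (pdiff i (S j)) x \<le> 0"
    "\<And>i k x. l1norm (i - k) = 1 \<Longrightarrow> pdiff k (pdiff i (S i)) x < 0"
    "\<exists>C. \<forall>i k j x. \<bar>pdiff k (pdiff i (S j)) x\<bar> \<le> C" "r > 0"
  using LP unfolding local_potentials_def by auto

lemma eps_exists:
  fixes S :: "int ^ 'd::finite \<Rightarrow> 'd config \<Rightarrow> real"
  assumes LP: "local_potentials r S" and D: "D \<ge> 0"
  shows "\<exists>\<epsilon>>0. \<forall>i k z. l1norm (i - k) = 1 \<longrightarrow> (\<forall>m\<in>ball1 i r. \<bar>z m - z i\<bar> \<le> D) \<longrightarrow>
            pdiff k (pdiff i (S i)) z \<le> - \<epsilon>"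
proof -
  note lp = LP_facts[OF LP]
  note dep = lp(1) and C2 = lp(2) and shB = lp(3) and Dneg = lp(5)
  define Q :: "'d config set" where "Q = PiE UNIV (\<lambda>m. if m \<in> ball1 0 r then {-(D+1)..D+1} else {0})"
  have cQ: "compact Q" unfolding Q_def by (rule compact_Q)
  have nQ: "(\<lambda>m. 0) \<in> Q" using D unfolding Q_def by (auto simp: PiE_iff)
  define G where "G e = pdiff e (pdiff 0 (S 0))" for e
  have each: "\<forall>e\<in>{e. l1norm (- e) = 1}. \<exists>\<epsilon>>0. \<forall>w\<in>Q. G e w \<le> - \<epsilon>"
  proof
    fix e :: "int ^ 'd" assume "e \<in> {e. l1norm (- e) = 1}"
    then have e: "l1norm (0 - e) = 1" by simp
    have "continuous_on UNIV (G e)" using C2[of 0] unfolding C2_local_def G_def by blast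
    then have "continuous_on Q (G e)" by (rule continuous_on_subset) simp
    have "Q \<noteq> {}" using nQ by blast
    from continuous_attains_sup[OF cQ this \<open>continuous_on Q (G e)\<close>] obtain s where s: "s \<in> Q" "\<forall>t\<in>Q. G e t \<le> G e s"
      by blast
    have "G e s < 0" unfolding G_def using Dneg[OF e] .
    then show "\<exists>\<epsilon>>0. \<forall>w\<in>Q. G e w \<le> - \<epsilon>" using s(2) by (intro exI[of _ "- G e s"]) auto
  qed
  from finite_eps[OF finite_unit each] obtain \<epsilon> where eps: "\<epsilon> > 0"
    "\<forall>e\<in>{e. l1norm (- e) = 1}. \<forall>w\<in>Q. G e w \<le> - \<epsilon>" by blast
  show ?thesis
  proof (intro exI[of _ \<epsilon>] conjI allI impI)
    show "\<epsilon> > 0" by fact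
    fix i k :: "int ^ 'd" and z :: "'d config"
    assume ik: "l1norm (i - k) = 1" and zb: "\<forall>m\<in>ball1 i r. \<bar>z m - z i\<bar> \<le> D"
    define e where "e = k - i"
    have e1: "l1norm (- e) = 1" using ik unfolding e_def by simp
    define l where "l = - \<lfloor>z i\<rfloor>"
    define w where "w = shift i l z"
    define w' where "w' = (\<lambda>m. if m \<in> ball1 0 r then w m else 0)"
    have s1: "\<And>a x. pdiff a (S 0) (shift i l x) = pdiff (a + i) (S (0 + i)) x"
      by (rule pdiff_shift) (rule shB)
    have s2: "pdiff e (pdiff 0 (S 0)) (shift i l z) = pdiff (e + i) (pdiff (0 + i) (S (0 + i))) z"
      by (rule pdiff_shift) (rule s1)
    have "pdiff k (pdiff i (S i)) z = G e w"
      using s2 unfolding G_def w_def e_def by simp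
    also have "G e w = G e w'"
    proof -
      have "depends_only_on (G e) (ball1 0 r)"
        unfolding G_def by (intro pdiff_depends dep)
      then show ?thesis unfolding depends_only_on_def w'_def by auto
    qed
    also have "G e w' \<le> - \<epsilon>"
    proof -
      have "w' \<in> Q"
        unfolding Q_def PiE_iff
      proof (intro conjI ballI)
        show "w' \<in> extensional UNIV" by simp
        fix m :: "int ^ 'd"
        show "w' m \<in> (if m \<in> ball1 0 r then {- (D + 1)..D + 1} else {0})"
        proof (cases "m \<in> ball1 0 r")
          case True
          then have "m + i \<in> ball1 i r" by (simp add: ball1_def)
          with zb have h: "\<bar>z (m + i) - z i\<bar> \<le> D" by blast
          have f: "z i - 1 < real_of_int \<lfloor>z i\<rfloor>" "real_of_int \<lfloor>z i\<rfloor> \<le> z i" by linarith+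
          have "w' m = z (m + i) - real_of_int \<lfloor>z i\<rfloor>" using True by (simp add: w'_def w_def shift_def l_def)
          moreover have h2: "z (m + i) - z i \<le> D" "z i - z (m + i) \<le> D" using h by (auto simp: abs_le_iff)
          ultimately have "- (D + 1) \<le> w' m \<and> w' m \<le> D + 1" using f by linarith
          then show ?thesis using True by simp
        next
          case False then show ?thesis by (simp add: w'_def)
        qed
      qed
      then show ?thesis using eps(2) e1 by blast
    qed
    finally show "pdiff k (pdiff i (S i)) z \<le> - \<epsilon>" .
  qed
qed



lemma seg_bound:
  fixes a b t D :: real
  assumes "\<bar>a\<bar> \<le> D" "\<bar>b\<bar> \<le> D" "0 \<le> t" "t \<le> 1"
  shows "\<bar>(1 - t) * a + t * b\<bar> \<le> D"
proof -
  have "\<bar>(1 - t) * a + t * b\<bar> \<le> \<bar>(1 - t) * a\<bar> + \<bar>t * b\<bar>" by (rule abs_triangle_ineq)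
  also have "\<dots> = (1 - t) * \<bar>a\<bar> + t * \<bar>b\<bar>" using assms by (simp add: abs_mult)
  also have "\<dots> \<le> (1 - t) * D + t * D"
    using assms by (intro add_mono mult_left_mono) auto
  finally show ?thesis by (simp add: algebra_simps)
qed

lemma neighbor_step:
  fixes S :: "int ^ 'd::finite \<Rightarrow> 'd config \<Rightarrow> real" and x y :: "'d config"
  assumes LP: "local_potentials r S"
    and Cb: "\<forall>i k j x. \<bar>pdiff k (pdiff i (S j)) x\<bar> \<le> C"
    and eps: "\<forall>i k z. l1norm (i - k) = 1 \<longrightarrow> (\<forall>m\<in>ball1 i r. \<bar>z m - z i\<bar> \<le> D0 + 2) \<longrightarrow>
            pdiff k (pdiff i (S i)) z \<le> - \<epsilon>"
    and bx: "\<forall>i m. m \<in> ball1 i r \<longrightarrow> \<bar>x m - x i\<bar> \<le> D0"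
    and byy: "\<forall>i m. m \<in> ball1 i r \<longrightarrow> \<bar>y m - y i\<bar> \<le> D0"
    and stx: "stationary r S x" and sty: "stationary r S y"
    and le: "x \<le> y"
    and nb: "l1norm (i - k0) = 1"
  shows "\<epsilon> * (y k0 - x k0) \<le> real (card (ball1 i r)) * C * (y i - x i)"
proof -
  note lp = LP_facts[OF LP]
  note dep = lp(1) and C2 = lp(2) and Dsign = lp(4) and Dneg = lp(5)
  have r0: "r > 0" by (rule lp(7))
  define v where "v m = y m - x m" for m
  have v0: "v m \<ge> 0" for m using le unfolding v_def le_fun_def by (simp add: algebra_simps)
  define Bl where "Bl = ball1 i r"
  have fB: "\<And>j. finite (ball1 j r)" by (rule finite_ball1)
  have iB: "i \<in> Bl" unfolding Bl_def using r0 by (intro center_ball1) simp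
  have k0B: "k0 \<in> Bl"
  proof (rule ccontr)
    assume "k0 \<notin> Bl"
    then have "pdiff k0 (pdiff i (S i)) x = 0"
      unfolding Bl_def by (intro pdiff_outside[OF pdiff_depends[OF dep]])
    with Dneg[OF nb, of x] show False by simp
  qed
  have k0i: "k0 \<noteq> i" using nb by (auto simp: l1norm_def)
  have C0: "C \<ge> 0" using Cb by (meson abs_ge_zero order_trans)
  define N :: nat where "N = nat \<lceil>\<Sum>m\<in>Bl. v m\<rceil> + 1"
  have N0: "real N > 0" unfolding N_def by simp
  have vN: "v m \<le> real N" if "m \<in> Bl" for m
  proof -
    have "v m \<le> (\<Sum>m\<in>Bl. v m)" using that fB v0 unfolding Bl_def by (intro member_le_sum) auto
    also have "\<dots> \<le> real (nat \<lceil>\<Sum>m\<in>Bl. v m\<rceil>)" by linarith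
    finally show ?thesis unfolding N_def by simp
  qed
  define p where "p s = (\<lambda>m. x m + (real s / real N) * v m)" for s :: nat
  have p0: "p 0 = x" unfolding p_def by simp
  have pN: "p N = y" unfolding p_def v_def using N0 by (simp add: fun_eq_iff)
  have pstep: "p (Suc s) m = p s m + v m / real N" for s m
    unfolding p_def by (simp add: field_simps add_divide_distrib)
  define F where "F j = pdiff i (S j)" for j
  have step: "F j (p (Suc s)) - F j (p s) \<le> (v i / real N) * C - (if j = i then (v k0 / real N) * \<epsilon> else 0)"
    if jB: "j \<in> Bl" and sN: "s < N" for j s
  proof -
    define Bj where "Bj = ball1 j r"
    define q where "q = (\<lambda>m. if m \<in> Bj then p (Suc s) m else p s m)"
    have depF: "depends_only_on (F j) Bj" unfolding F_def Bj_def by (intro pdiff_depends dep)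
    have Fq: "F j q = F j (p (Suc s))" using depF unfolding depends_only_on_def q_def by auto
    have ex: "\<And>k. pdiff_exists k (F j)" using C2[of j] unfolding C2_local_def F_def by blast
    have out: "\<forall>m. m \<notin> Bj \<longrightarrow> p s m = q m" unfolding q_def by auto
    from telescope[OF fB[of j] ex out[unfolded Bj_def]] obtain c where
      c1: "F j q - F j (p s) = (\<Sum>k\<in>ball1 j r. (q k - p s k) * c k)" and
      c2: "\<forall>k\<in>ball1 j r. \<exists>z. (\<forall>m. min (p s m) (q m) \<le> z m \<and> z m \<le> max (p s m) (q m)) \<and> c k = pdiff k (F j) z"
      by blast
    define b where "b k = (if k = i then (v i / real N) * C else 0) + (if k = k0 then (if j = i then - ((v k0 / real N) * \<epsilon>) else 0) else 0)" for k
    have tb: "(q k - p s k) * c k \<le> b k" if kB: "k \<in> ball1 j r" for k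
    proof -
      have qk: "q k - p s k = v k / real N" using kB unfolding q_def Bj_def by (simp add: pstep)
      have vk: "v k / real N \<ge> 0" using v0 N0 by simp
      from c2 kB obtain z where zb: "\<forall>m. min (p s m) (q m) \<le> z m \<and> z m \<le> max (p s m) (q m)"
        and ck: "c k = pdiff k (F j) z" by blast
      show ?thesis
      proof (cases "k = i")
        case True
        have "\<bar>c k\<bar> \<le> C" using Cb ck unfolding F_def by simp
        then have "c k \<le> C" by (rule abs_le_D1)
        then have "(v k / real N) * c k \<le> (v k / real N) * C" using vk by (rule mult_left_mono)
        then show ?thesis using True k0i qk unfolding b_def by simp
      next
        case False
        have cneg: "c k \<le> 0" using Dsign[of i k] False ck unfolding F_def by auto
        show ?thesis
        proof (cases "k = k0 \<and> j = i")
          case True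
          have zbound: "\<forall>m\<in>ball1 i r. \<bar>z m - z i\<bar> \<le> D0 + 2"
          proof
            fix m assume mB: "m \<in> ball1 i r"
            have near: "\<bar>z m' - p s m'\<bar> \<le> 1" if "m' \<in> ball1 i r" for m'
            proof -
              have "q m' = p s m' + v m' / real N" using that True unfolding q_def Bj_def by (simp add: pstep)
              moreover have "v m' / real N \<le> 1" using vN[of m'] that N0 unfolding Bl_def by simp
              moreover have "v m' / real N \<ge> 0" using v0 N0 by simp
              ultimately show ?thesis using zb[rule_format, of m'] by (auto simp: abs_le_iff)
            qed
            have "p s m - p s i = (1 - real s / real N) * (x m - x i) + (real s / real N) * (y m - y i)"
              unfolding p_def v_def using N0 by (simp add: field_simps)
            moreover have "\<bar>(1 - real s / real N) * (x m - x i) + (real s / real N) * (y m - y i)\<bar> \<le> D0"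
              using bx mB byy sN N0 by (intro seg_bound) auto
            ultimately have "\<bar>p s m - p s i\<bar> \<le> D0" by simp
            moreover have "\<bar>z m - p s m\<bar> \<le> 1" by (rule near[OF mB])
            moreover have "\<bar>z i - p s i\<bar> \<le> 1" using near iB unfolding Bl_def by blast
            ultimately show "\<bar>z m - z i\<bar> \<le> D0 + 2" by (auto simp: abs_le_iff)
          qed
          have "c k \<le> - \<epsilon>" using eps[rule_format, of i k0 z, OF nb zbound[rule_format]] True ck unfolding F_def by simp
          then have "(v k / real N) * c k \<le> (v k / real N) * (- \<epsilon>)" using vk by (rule mult_left_mono)
          then show ?thesis using True k0i qk unfolding b_def by simp
        next
          case False2: False
          have "(v k / real N) * c k \<le> 0" using vk cneg by (rule mult_nonneg_nonpos)
          moreover have "b k = 0" using False False2 unfolding b_def by auto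
          ultimately show ?thesis using qk by simp
        qed
      qed
    qed
    have "F j (p (Suc s)) - F j (p s) = (\<Sum>k\<in>ball1 j r. (q k - p s k) * c k)" using c1 Fq by simp
    also have "\<dots> \<le> (\<Sum>k\<in>ball1 j r. b k)" by (intro sum_mono tb)
    also have "(\<Sum>k\<in>ball1 j r. b k) = (if i \<in> ball1 j r then (v i / real N) * C else 0)
        + (if k0 \<in> ball1 j r then (if j = i then - ((v k0 / real N) * \<epsilon>) else 0) else 0)"
      unfolding b_def by (simp add: sum.distrib fB)
    also have "\<dots> \<le> (v i / real N) * C - (if j = i then (v k0 / real N) * \<epsilon> else 0)"
    proof -
      have "(v i / real N) * C \<ge> 0" using v0 N0 C0 by simp
      moreover have "j = i \<Longrightarrow> k0 \<in> ball1 j r" using k0B unfolding Bl_def by simp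
      ultimately show ?thesis by auto
    qed
    finally show ?thesis .
  qed
  have tot: "F j y - F j x \<le> v i * C - (if j = i then v k0 * \<epsilon> else 0)" if jB: "j \<in> Bl" for j
  proof -
    have "F j y - F j x = (\<Sum>s<N. F j (p (Suc s)) - F j (p s))"
      using sum_lessThan_telescope[of "\<lambda>s. F j (p s)" N] p0 pN by simp
    also have "\<dots> \<le> (\<Sum>s<N. (v i / real N) * C - (if j = i then (v k0 / real N) * \<epsilon> else 0))"
      by (intro sum_mono step jB) simp
    also have "\<dots> = real N * ((v i / real N) * C - (if j = i then (v k0 / real N) * \<epsilon> else 0))"
      by simp
    also have "\<dots> = v i * C - (if j = i then v k0 * \<epsilon> else 0)"
      using N0 by (simp add: field_simps)
    finally show ?thesis .
  qed
  have "0 = (\<Sum>j\<in>Bl. F j y) - (\<Sum>j\<in>Bl. F j x)"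
    using stx sty unfolding stationary_def F_def Bl_def by simp
  also have "\<dots> = (\<Sum>j\<in>Bl. F j y - F j x)" by (simp add: sum_subtractf)
  also have "\<dots> \<le> (\<Sum>j\<in>Bl. v i * C - (if j = i then v k0 * \<epsilon> else 0))"
    by (intro sum_mono tot)
  also have "\<dots> = real (card Bl) * (v i * C) - v k0 * \<epsilon>"
  proof -
    have d: "(\<Sum>j\<in>Bl. if j = i then v k0 * \<epsilon> else 0) = v k0 * \<epsilon>"
      using sum.delta[OF fB[of i], of i "\<lambda>_. v k0 * \<epsilon>"] iB unfolding Bl_def by simp
    show ?thesis by (simp only: sum_subtractf d) simp
  qed
  finally show ?thesis unfolding v_def Bl_def by (simp add: algebra_simps)
qed



theorem mainTheorem8:
  fixes S :: "int ^ 'd \<Rightarrow> (int ^ 'd \<Rightarrow> real) \<Rightarrow> real"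
    and r :: real
    and K :: "(real ^ 'd) set"
  assumes "local_potentials r S"
    and "compact K"
  shows "\<exists>\<delta> :: nat \<Rightarrow> real. (\<forall>n. \<delta> n > 0) \<and>
    (\<forall>x y \<omega> \<nu>. birkhoff x \<and> birkhoff y \<and>
        has_rotation_vector x \<omega> \<and> \<omega> \<in> K \<and>
        has_rotation_vector y \<nu> \<and> \<nu> \<in> K \<and>
        stationary r S x \<and> stationary r S y \<and> x < y \<longrightarrow>
        (\<forall>i k. y k - x k \<le> \<delta> (l1norm (i - k)) * (y i - x i)) \<and>
        strictly_below x y)"
proof -
  note LP = assms(1)
  note lp = LP_facts[OF LP]
  obtain C where Cb: "\<forall>i k j x. \<bar>pdiff k (pdiff i (S j)) x\<bar> \<le> C" using lp(6) by blast
  have C0: "C \<ge> 0" using Cb by (meson abs_ge_zero order_trans)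
  have r0: "r > 0" by (rule lp(7))
  obtain B0 where B0: "\<forall>\<omega>\<in>K. norm \<omega> \<le> B0"
    using compact_imp_bounded[OF assms(2)] unfolding bounded_iff by blast
  define B where "B = max B0 0"
  have Bcomp: "\<bar>\<omega> $ m\<bar> \<le> B" if "\<omega> \<in> K" for \<omega> m
  proof -
    have "\<bar>\<omega> $ m\<bar> \<le> norm \<omega>" by (rule component_le_norm_cart)
    also have "\<dots> \<le> B0" using B0 that by blast
    also have "\<dots> \<le> B" unfolding B_def by simp
    finally show ?thesis .
  qed
  have B_0: "B \<ge> 0" unfolding B_def by simp
  define D0 where "D0 = B * r + 1"
  have D0: "D0 \<ge> 0" unfolding D0_def using B_0 r0 by simp
  have diffb: "\<forall>i m. m \<in> ball1 i r \<longrightarrow> \<bar>x m - x i\<bar> \<le> D0"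
    if "birkhoff x" "has_rotation_vector x \<omega>" "\<omega> \<in> K" for x :: "'d config" and \<omega>
  proof (intro allI impI)
    fix i m :: "int ^ 'd" assume mB: "m \<in> ball1 i r"
    have h1: "\<bar>x (i + (m - i)) - x i - rv \<omega> (m - i)\<bar> \<le> 1" by (rule birk_bound[OF that(1,2)])
    have h2: "\<bar>rv \<omega> (m - i)\<bar> \<le> B * real (l1norm (m - i))" by (rule rv_bound[OF Bcomp[OF that(3)]])
    have "real (l1norm (m - i)) \<le> r" using mB by (simp add: ball1_def)
    then have "B * real (l1norm (m - i)) \<le> B * r" using B_0 by (rule mult_left_mono)
    then show "\<bar>x m - x i\<bar> \<le> D0" using h1 h2 unfolding D0_def by (simp add: abs_le_iff)
  qed
  obtain \<epsilon> where eps0: "\<epsilon> > 0" and eps: "\<forall>i k z. l1norm (i - k) = 1 \<longrightarrow>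
      (\<forall>m\<in>ball1 i r. \<bar>z m - z i\<bar> \<le> D0 + 2) \<longrightarrow> pdiff k (pdiff i (S i)) z \<le> - \<epsilon>"
    using eps_exists[OF LP, of "D0 + 2"] D0 by force
  define lam where "lam = max 1 (real (card (ball1 (0 :: int ^ 'd) r)) * C / \<epsilon>)"
  have lam1: "lam \<ge> 1" unfolding lam_def by simp
  show ?thesis
  proof (intro exI[of _ "\<lambda>n. lam ^ n"] conjI)
    show "\<forall>n. lam ^ n > 0" using lam1 by simp
  next
    show "\<forall>x y \<omega> \<nu>. birkhoff x \<and> birkhoff y \<and>
        has_rotation_vector x \<omega> \<and> \<omega> \<in> K \<and>
        has_rotation_vector y \<nu> \<and> \<nu> \<in> K \<and>
        stationary r S x \<and> stationary r S y \<and> x < y \<longrightarrow>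
        (\<forall>i k. y k - x k \<le> lam ^ (l1norm (i - k)) * (y i - x i)) \<and>
        strictly_below x y"
  proof (intro allI impI)
    fix x y :: "'d config" and \<omega> \<nu>
    assume H: "birkhoff x \<and> birkhoff y \<and> has_rotation_vector x \<omega> \<and> \<omega> \<in> K \<and>
        has_rotation_vector y \<nu> \<and> \<nu> \<in> K \<and> stationary r S x \<and> stationary r S y \<and> x < y"
    define v where "v m = y m - x m" for m
    have Hs: "birkhoff x" "birkhoff y" "has_rotation_vector x \<omega>" "\<omega> \<in> K"
      "has_rotation_vector y \<nu>" "\<nu> \<in> K" "stationary r S x" "stationary r S y" "x < y"
      using H by auto
    have le: "x \<le> y" using Hs(9) by (rule less_imp_le)
    have v0: "v m \<ge> 0" for m using le unfolding v_def le_fun_def by (simp add: algebra_simps)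
    have bx: "\<forall>i m. m \<in> ball1 i r \<longrightarrow> \<bar>x m - x i\<bar> \<le> D0" by (rule diffb[OF Hs(1,3,4)])
    have byy: "\<forall>i m. m \<in> ball1 i r \<longrightarrow> \<bar>y m - y i\<bar> \<le> D0" by (rule diffb[OF Hs(2,5,6)])
    have nbr: "v k0 \<le> lam *  v i" if "l1norm (i - k0) = 1" for i k0
    proof -
      have "\<epsilon> * (y k0 - x k0) \<le> real (card (ball1 i r)) * C * (y i - x i)"
        by (rule neighbor_step[OF LP Cb eps bx byy Hs(7,8) le that])
      then have "\<epsilon> * v k0 \<le> real (card (ball1 (0 :: int ^ 'd) r)) * C * v i"
        unfolding v_def card_ball1[of i r] .
      then have "v k0 \<le> (real (card (ball1 (0 :: int ^ 'd) r)) * C / \<epsilon>) * v i"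
        using eps0 by (simp add: field_simps)
      also have "\<dots> \<le> lam *  v i" unfolding lam_def by (intro mult_right_mono v0) simp
      finally show ?thesis .
    qed
    have path: "\<forall>i k. l1norm (i - k) = n \<longrightarrow> v k \<le> lam ^ n * v i" for n
    proof (induction n)
      case 0
      then show ?case by (auto simp: l1norm_zero)
    next
      case (Suc n)
      show ?case
      proof (intro allI impI)
        fix i k :: "int ^ 'd" assume "l1norm (i - k) = Suc n"
        from l1norm_step[OF this] obtain e where e: "l1norm e = 1" "l1norm (i - k - e) = n" by blast
        have "l1norm (i - (k + e)) = n" using e(2) by (simp add: diff_diff_eq)
        then have "v (k + e) \<le> lam ^ n * v i" using Suc.IH by blast
        moreover have "v k \<le> lam *  v (k + e)" by (rule nbr) (use e(1) in simp)
        moreover have "lam * v (k + e) \<le> lam * (lam ^ n * v i)"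
          using lam1 calculation(1) by (intro mult_left_mono) auto
        ultimately have "v k \<le> lam *  (lam ^ n * v i)" by linarith
        then show "v k \<le> lam ^ Suc n * v i" by (simp add: mult.assoc)
      qed
    qed
    have P1: "\<forall>i k. y k - x k \<le> lam ^ l1norm (i - k) * (y i - x i)"
      using path unfolding v_def by blast
    have "strictly_below x y"
      unfolding strictly_below_def
    proof
      fix i
      from Hs(9) have "x < y" .
      then have "\<not> y \<le> x" by (simp add: less_le_not_le)
      then obtain i0 where "\<not> y i0 \<le> x i0" unfolding le_fun_def by blast
      then have i0: "x i0 < y i0" by simp
      have "v i0 \<le> lam ^ l1norm (i - i0) * v i" using path by blast
      moreover have "v i0 > 0" using i0 unfolding v_def by simp
      moreover have "lam ^ l1norm (i - i0) > 0" using lam1 by simp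
      ultimately have "v i \<noteq> 0" by auto
      then have "v i > 0" using v0[of i] by linarith
      then show "x i < y i" unfolding v_def by simp
    qed
    with P1 show "(\<forall>i k. y k - x k \<le> lam ^ (l1norm (i - k)) * (y i - x i)) \<and> strictly_below x y" by blast
  qed
  qed
qed

end
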